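(* Every bounded monomial polyhedron $\mathscr{U}\subset\mathbb{C}^n$ is contained in the unit polydisc $\mathbb{D}^n$, and its boundary contains the unit torus $\mathbb{T}^n=\{z:|z_j|=1,\ 1\le j\le n\}$.
   Context: A monomial polyhedron defined by $B\in M_n(\mathbb{Q})$ with rows $b^j$ is $\mathscr{U}=\{z\in\mathbb{C}^n: \prod_{k}|z_k|^{b^j_k}<1 \text{ for all } j\}$, where $z$ is excluded if some product is undefined due to division by zero (some $z_k=0$ with $b^j_k<0$); it is assumed to be a nonempty domain. *)

theory Defs
  imports "HOL-Analysis.Analysis"
begin

text \<open>Real power of a nonnegative real with the conventions 0^0 = 1 and 0^a = 0 for a > 0
  (the case 0^a with a < 0 is excluded separately in the definition below).\<close>
definition mpow :: "real \<Rightarrow> real \<Rightarrow> real" where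
  "mpow x a = (if x = 0 then (if a = 0 then 1 else 0) else x powr a)"

definition monomial_polyhedron :: "rat^'n^'n \<Rightarrow> (complex^'n) set" where
  "monomial_polyhedron B =
     {z. \<forall>j. (\<forall>k. z $ k = 0 \<longrightarrow> B $ j $ k \<ge> 0) \<and>
            (\<Prod>k\<in>UNIV. mpow (norm (z $ k)) (real_of_rat (B $ j $ k))) < 1}"

definition unit_polydisc :: "(complex^'n) set" where
  "unit_polydisc = {z. \<forall>j. norm (z $ j) < 1}"

definition unit_torus :: "(complex^'n) set" where
  "unit_torus = {z. \<forall>j. norm (z $ j) = 1}"

end

theory Submission
  imports Defs
begin

lemma scale_mem:
  fixes B :: "rat^'n^'n"
  assumes z: "z \<in> monomial_polyhedron B" and nz: "\<forall>k. z$k \<noteq> 0" and t: "t > 0"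
    and c: "\<forall>k. norm (c k) = 1"
  shows "(\<chi> k. c k * of_real (norm (z$k) powr t)) \<in> monomial_polyhedron B"
proof -
  let ?w = "(\<chi> k. c k * of_real (norm (z$k) powr t)) :: complex^'n"
  have nw: "norm (?w$k) = norm (z$k) powr t" for k
    using c by (simp add: norm_mult)
  have pos: "norm (z$k) > 0" for k using nz by simp
  show ?thesis unfolding monomial_polyhedron_def
  proof (rule CollectI, rule allI, rule conjI)
    fix j
    show "\<forall>k. ?w $ k = 0 \<longrightarrow> 0 \<le> B $ j $ k"
      proof (intro allI impI)
      fix k assume "?w $ k = 0"
      hence "norm (?w $ k) = 0" by simp
      thus "0 \<le> B $ j $ k" using nw[of k] pos[of k] by simp
    qed
    define P where "P = (\<Prod>k\<in>UNIV. mpow (norm (z $ k)) (real_of_rat (B $ j $ k)))"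
    have P1: "P < 1" using z unfolding monomial_polyhedron_def P_def by auto
    have Peq: "P = (\<Prod>k\<in>UNIV. norm (z $ k) powr (real_of_rat (B $ j $ k)))"
      unfolding P_def mpow_def using pos by (intro prod.cong) auto
    have P0: "P > 0" unfolding Peq using pos by (intro prod_pos) auto
    have "(\<Prod>k\<in>UNIV. mpow (norm (?w $ k)) (real_of_rat (B $ j $ k)))
        = (\<Prod>k\<in>UNIV. (norm (z $ k) powr (real_of_rat (B $ j $ k))) powr t)"
      unfolding nw mpow_def using pos by (intro prod.cong) (auto simp: powr_powr mult.commute)
    also have "\<dots> = P powr t" unfolding Peq by (simp add: prod_powr_distrib)
    also have "\<dots> < 1 powr t" using P0 P1 t by (intro powr_less_mono2) auto
    finally show "(\<Prod>k\<in>UNIV. mpow (norm (?w $ k)) (real_of_rat (B $ j $ k))) < 1" by simp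
  qed
qed

lemma perturb:
  fixes B :: "rat^'n^'n"
  assumes z: "z \<in> monomial_polyhedron B" and op: "open (monomial_polyhedron B)"
  shows "\<exists>w \<in> monomial_polyhedron B. (\<forall>k. w$k \<noteq> 0) \<and> (\<forall>k. norm (w$k) > norm (z$k))"
proof -
  obtain e where e: "e > 0" "ball z e \<subseteq> monomial_polyhedron B"
    using op z open_contains_ball by blast
  define u :: "complex^'n" where "u = (\<chi> k. if z$k = 0 then 1 else z$k / of_real (norm (z$k)))"
  have nu: "norm (u$k) = 1" for k by (simp add: u_def norm_divide)
  have nuv: "norm u \<le> real CARD('n)"
    unfolding norm_vec_def using L2_set_le_sum[of UNIV "\<lambda>i. norm (u$i)"] by (simp add: nu)
  define d where "d = e / (2 * real CARD('n))"
  have d: "d > 0" using e by (simp add: d_def)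
  define w where "w = z + d *\<^sub>R u"
  have "norm (d *\<^sub>R u) < e"
  proof -
    have "norm (d *\<^sub>R u) = d * norm u" using d by simp
    also have "\<dots> \<le> d * real CARD('n)" using d nuv by (intro mult_left_mono) auto
    also have "\<dots> < e" using e by (simp add: d_def)
    finally show ?thesis .
  qed
  hence "w \<in> ball z e" by (simp add: w_def dist_norm)
  hence wU: "w \<in> monomial_polyhedron B" using e by blast
  have wk: "norm (w$k) = norm (z$k) + d" for k
  proof (cases "z$k = 0")
    case True thus ?thesis using d by (simp add: w_def u_def)
  next
    case False
    have w1: "w$k = z$k + d *\<^sub>R (u$k)" by (simp add: w_def)
    have u1: "u$k = z$k / of_real (norm (z$k))" using False by (simp add: u_def)
    have "w$k = z$k + complex_of_real d * (z$k / of_real (norm (z$k)))"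
      unfolding w1 u1 by (simp add: scaleR_conv_of_real)
    also have "\<dots> = z$k * of_real (1 + d / norm (z$k))"
      using False by (simp add: field_simps)
    finally have "w$k = z$k * of_real (1 + d / norm (z$k))" .
    hence "norm (w$k) = norm (z$k) * (1 + d / norm (z$k))"
      using d by (simp only: norm_mult norm_of_real) (simp add: abs_of_nonneg)
    thus ?thesis using False by (simp add: distrib_left)
  qed
  have "w$k \<noteq> 0" for k
  proof -
    have "norm (w$k) > 0" using wk[of k] d norm_ge_zero[of "z$k"] by linarith
    thus ?thesis by auto
  qed
  moreover have "norm (w$k) > norm (z$k)" for k using wk[of k] d by linarith
  ultimately show ?thesis using wU by blast
qed


theorem corollary3p2:
  fixes B :: "rat^'n^'n"
  assumes "monomial_polyhedron B \<noteq> {}"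
    and "open (monomial_polyhedron B)"
    and "connected (monomial_polyhedron B)"
    and "bounded (monomial_polyhedron B)"
  shows "monomial_polyhedron B \<subseteq> unit_polydisc \<and> unit_torus \<subseteq> frontier (monomial_polyhedron B)"
proof
  let ?U = "monomial_polyhedron B"
  obtain M where M: "\<forall>y\<in>?U. norm y \<le> M" using assms(4) bounded_iff by blast
  show "?U \<subseteq> unit_polydisc"
  proof
    fix z assume z: "z \<in> ?U"
    show "z \<in> unit_polydisc" unfolding unit_polydisc_def
    proof (rule CollectI, rule allI, rule ccontr)
      fix m assume zm: "\<not> norm (z$m) < 1"
      obtain w where wU: "w \<in> ?U" and wnz: "\<forall>k. w$k \<noteq> 0" and wz: "\<forall>k. norm (w$k) > norm (z$k)"
        using perturb[OF z assms(2)] by blast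
      have wm: "norm (w$m) > 1" using zm wz[rule_format, of m] by linarith
      obtain n where n: "M < norm (w$m) ^ n" using real_arch_pow[OF wm] by blast
      define p :: "complex^'n" where "p = (\<chi> k. 1 * of_real (norm (w$k) powr real (Suc n)))"
      have pU: "p \<in> ?U" unfolding p_def by (rule scale_mem[OF wU wnz]) auto
      have "norm (p$m) = norm (w$m) ^ Suc n"
      proof -
        have "norm (p$m) = norm (w$m) powr real (Suc n)" by (simp add: p_def)
        also have "\<dots> = norm (w$m) ^ Suc n" using wm by (intro powr_realpow) auto
        finally show ?thesis .
      qed
      also have "\<dots> \<ge> norm (w$m) ^ n" using wm by (intro power_increasing) auto
      finally have "norm p > M" using n Finite_Cartesian_Product.norm_nth_le[of p m] by linarith
      thus False using M pU by force
    qed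
  qed
next
  let ?U = "monomial_polyhedron B"
  show "unit_torus \<subseteq> frontier ?U"
  proof
    fix x :: "complex^'n" assume x: "x \<in> unit_torus"
    hence xn: "norm (x$k) = 1" for k by (simp add: unit_torus_def)
    have "x \<notin> ?U"
    proof
      assume "x \<in> ?U"
      hence "(\<Prod>k\<in>UNIV. mpow (norm (x $ k)) (real_of_rat (B $ j $ k))) < 1" for j
        unfolding monomial_polyhedron_def by blast
      thus False by (simp add: xn mpow_def)
    qed
    moreover
    obtain z where z: "z \<in> ?U" using assms(1) by blast
    then obtain w where wU: "w \<in> ?U" and wnz: "\<forall>k. w$k \<noteq> 0"
      using perturb[OF z assms(2)] by force
    define f :: "real \<Rightarrow> complex^'n" where "f t = (\<chi> k. x$k * of_real (norm (w$k) powr t))" for t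
    have "x \<in> closure ?U"
    proof (rule Lim_in_closed_set[of _ f "at_right 0"])
      show "closed (closure ?U)" by simp
      show "eventually (\<lambda>t. f t \<in> closure ?U) (at_right 0)"
        using eventually_at_right_less[of "0::real"]
      proof (rule eventually_mono)
        fix t :: real assume "0 < t"
        hence "f t \<in> ?U" unfolding f_def by (rule scale_mem[OF wU wnz]) (simp add: xn)
        thus "f t \<in> closure ?U" using closure_subset by blast
      qed
      show "at_right (0::real) \<noteq> bot" by simp
      have "(f \<longlongrightarrow> (\<chi> k. x$k * of_real (norm (w$k) powr 0))) (at_right 0)"
        unfolding f_def by (intro tendsto_intros) (use wnz in auto)
      moreover have "(\<chi> k. x$k * of_real (norm (w$k) powr 0)) = x"
        using wnz by (simp add: vec_eq_iff)
      ultimately show "(f \<longlongrightarrow> x) (at_right 0)" by simp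
    qed
    ultimately show "x \<in> frontier ?U"
      using assms(2) by (simp add: frontier_def interior_open)
  qed
qed

end
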